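(* Let $m,n\ge r\ge1$, let $L:\mathbb{R}^{m\times n}\to\mathbb{R}$ be differentiable, let $\lambda>0$ and $\tau>0$. For $A\in\mathbb{R}^{m\times r}$, $B\in\mathbb{R}^{n\times r}$ set $\mathcal{L}_{L2}(A,B)=L(AB^\top)+\frac{\lambda}{2}\left(\|A\|_F^2+\|B\|_F^2\right)$ and $\mathcal{L}_*(AB^\top)=L(AB^\top)+\lambda\|AB^\top\|_*$. Let $(A(t),B(t))_{t\ge0}$ be a solution of the gradient flow $\tau\dot A=-\nabla_A\mathcal{L}_{L2}(A,B)$, $\tau\dot B=-\nabla_B\mathcal{L}_{L2}(A,B)$. If $\|A(t)\|_F$ and $\|B(t)\|_F$ remain bounded for all $t\ge0$, then $\left|\mathcal{L}_{L2}(A(t),B(t))-\mathcal{L}_*(A(t)B(t)^\top)\right|$ converges exponentially fast to $0$ as $t\to\infty$.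
   Context: $\|\cdot\|_F$ is the Frobenius norm and $\|W\|_*=\operatorname{Tr}(\sqrt{WW^\top})$ the nuclear norm (sum of singular values). "Converges exponentially fast to 0" means bounded by $Ce^{-ct}$ for some constants $C,c>0$. *)

theory Defs
  imports "HOL-Analysis.Analysis"
begin

text \<open>Matrices are elements of real^'c^'r (rows indexed by 'r, columns by 'c).
  The Euclidean norm / inner product on real^'c^'r are exactly the Frobenius
  norm / Frobenius inner product.\<close>

definition frob_norm :: "real^'c^'r \<Rightarrow> real" where
  "frob_norm M = sqrt (\<Sum>i\<in>UNIV. \<Sum>j\<in>UNIV. (M $ i $ j)^2)"

definition psd :: "real^'n^'n \<Rightarrow> bool" where
  "psd P \<longleftrightarrow> transpose P = P \<and> (\<forall>x. 0 \<le> x \<bullet> (P *v x))"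

definition msqrt :: "real^'n^'n \<Rightarrow> real^'n^'n" where
  "msqrt S = (THE P. psd P \<and> P ** P = S)"

definition nuclear_norm :: "real^'c^'r \<Rightarrow> real" where
  "nuclear_norm W = trace (msqrt (W ** transpose W))"

definition L_L2 :: "(real^'n^'m \<Rightarrow> real) \<Rightarrow> real \<Rightarrow> real^'r^'m \<Rightarrow> real^'r^'n \<Rightarrow> real" where
  "L_L2 L lam A B = L (A ** transpose B) + lam/2 * ((frob_norm A)^2 + (frob_norm B)^2)"

definition L_nuc :: "(real^'n^'m \<Rightarrow> real) \<Rightarrow> real \<Rightarrow> real^'n^'m \<Rightarrow> real" where
  "L_nuc L lam W = L W + lam * nuclear_norm W"

end

theory Submission
  imports Defs
begin

lemma axis_diag: "axis i 1 \<bullet> ((M::real^'n^'n) *v axis i 1) = M$i$i"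
  by (metis cart_eq_inner_axis inner_commute matrix_vector_mul_component)

lemma inner_mv: "x \<bullet> ((M::real^'a^'b) *v y) = (transpose M *v x) \<bullet> y"
  by (metis dot_lmul_matrix transpose_matrix_vector)

lemma inner_mv_sym: "transpose M = M \<Longrightarrow> x \<bullet> ((M::real^'n^'n) *v y) = (M *v x) \<bullet> y"
  by (metis inner_mv)

lemma psd_zero:
  fixes Q :: "real^'n^'n"
  assumes sym: "transpose Q = Q" and nn: "\<And>x. 0 \<le> x \<bullet> (Q *v x)" and z: "v \<bullet> (Q *v v) = 0"
  shows "Q *v v = 0"
proof -
  define w where "w = Q *v v"
  define a where "a = w \<bullet> w"
  define b where "b = w \<bullet> (Q *v w)"
  have b0: "0 \<le> b" using nn b_def by auto
  have "\<And>t. (v - t *\<^sub>R w) \<bullet> (Q *v (v - t *\<^sub>R w)) = - 2 * t * a + t^2 * b"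
  proof -
    fix t
    have "(v - t *\<^sub>R w) \<bullet> (Q *v (v - t *\<^sub>R w))
        = v \<bullet> (Q *v v) - t * (v \<bullet> (Q *v w)) - t * (w \<bullet> (Q *v v)) + t*t * b"
      by (simp add: matrix_vector_mult_diff_distrib matrix_vector_mult_scaleR inner_diff_left
          inner_diff_right b_def algebra_simps)
    moreover have "v \<bullet> (Q *v w) = a" using inner_mv_sym[OF sym, of v w] by (simp add: a_def w_def inner_commute)
    moreover have "w \<bullet> (Q *v v) = a" by (simp add: a_def w_def)
    ultimately show "(v - t *\<^sub>R w) \<bullet> (Q *v (v - t *\<^sub>R w)) = - 2 * t * a + t^2 * b"
      using z by (simp add: power2_eq_square)
  qed
  then have "\<And>t. 0 \<le> - 2 * t * a + t^2 * b" using nn by metis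
  from this[of "a/(b+1)"] have "0 \<le> - 2 * (a/(b+1)) * a + (a/(b+1))^2 * b" .
  moreover have "(b+1)^2 * (- 2 * (a/(b+1)) * a + (a/(b+1))^2 * b) = - 2 * a * a * (b+1) + a*a*b"
  proof -
    have "b + 1 \<noteq> 0" using b0 by linarith
    then have ct: "(b+1) * (a/(b+1)) = a" by simp
    have gen: "c^2 * (- 2 * t * a + t^2 * b) = - 2 * a * (c * t) * c + (c * t)^2 * b" for c t :: real
      by (simp add: algebra_simps power2_eq_square)
    have "(b+1)^2 * (- 2 * (a/(b+1)) * a + (a/(b+1))^2 * b)
       = - 2 * a * ((b+1) * (a/(b+1))) * (b+1) + ((b+1) * (a/(b+1)))^2 * b"
      by (rule gen)
    also have "\<dots> = - 2 * a * a * (b+1) + a*a*b" by (simp only: ct) (simp add: power2_eq_square)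
    finally show ?thesis .
  qed
  ultimately have "0 \<le> - 2 * a * a * (b+1) + a*a*b"
    by (metis zero_le_power2 mult_nonneg_nonneg)
  then have "a * a * (b + 2) \<le> 0" by (simp add: algebra_simps)
  then have "a * a \<le> 0" using mult_le_0_iff[of "a*a" "b+2"] b0 by auto
  then have "a = 0" by (metis mult_eq_0_iff order_antisym zero_le_square)
  then show ?thesis by (simp add: a_def w_def)
qed


lemma rayleigh:
  fixes M :: "real^'n^'n"
  assumes sym: "transpose M = M" and V: "subspace V" and ne: "x0 \<in> V" "x0 \<noteq> 0"
    and inv: "\<And>x. x \<in> V \<Longrightarrow> M *v x \<in> V"
  shows "\<exists>v\<in>V. norm v = 1 \<and> M *v v = (v \<bullet> (M *v v)) *\<^sub>R v \<and>
           (\<forall>x\<in>V. norm x = 1 \<longrightarrow> x \<bullet> (M *v x) \<le> v \<bullet> (M *v v))"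
proof -
  let ?K = "sphere 0 1 \<inter> V"
  have cK: "compact ?K"
    by (simp add: V closed_subspace compact_Int_closed)
  have "x0 /\<^sub>R norm x0 \<in> ?K" using ne V by (simp add: subspace_scale)
  then have neK: "?K \<noteq> {}" by blast
  have cont: "continuous_on ?K (\<lambda>x. x \<bullet> (M *v x))"
    by (intro continuous_intros)
  obtain v where vK: "v \<in> ?K" and vmax: "\<And>x. x \<in> ?K \<Longrightarrow> x \<bullet> (M *v x) \<le> v \<bullet> (M *v v)"
    using continuous_attains_sup[OF cK neK cont] by blast
  define \<mu> where "\<mu> = v \<bullet> (M *v v)"
  have vV: "v \<in> V" and nv: "norm v = 1" using vK by auto
  have vv: "v \<bullet> v = 1" using nv by (simp add: dot_square_norm)
  have gen: "x \<bullet> (M *v x) \<le> \<mu> * (x \<bullet> x)" if "x \<in> V" for x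
  proof (cases "x = 0")
    case True then show ?thesis by simp
  next
    case False
    have "x /\<^sub>R norm x \<in> ?K" using False that V by (simp add: subspace_scale)
    from vmax[OF this] have "(x /\<^sub>R norm x) \<bullet> (M *v (x /\<^sub>R norm x)) \<le> \<mu>" by (simp add: \<mu>_def)
    then have "(x \<bullet> (M *v x)) / (norm x)^2 \<le> \<mu>"
      by (simp add: matrix_vector_mult_scaleR power2_eq_square divide_inverse mult_ac)
    moreover have "(norm x)^2 = x \<bullet> x" by (simp add: dot_square_norm)
    moreover have "0 < x \<bullet> x" using False by simp
    ultimately show ?thesis by (simp add: divide_le_eq mult.commute)
  qed
  define u where "u = M *v v - \<mu> *\<^sub>R v"
  have uV: "u \<in> V" unfolding u_def using vV inv V by (simp add: subspace_diff subspace_scale)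
  have uv: "u \<bullet> (M *v v) - \<mu> * (u \<bullet> v) = u \<bullet> u"
    by (simp add: u_def inner_diff_left inner_diff_right algebra_simps)
  define c where "c = u \<bullet> (M *v u) - \<mu> * (u \<bullet> u)"
  have key: "2 * t * (u \<bullet> u) + t^2 * c \<le> 0" for t
  proof -
    have "v + t *\<^sub>R u \<in> V" using vV uV V by (simp add: subspace_add subspace_scale)
    note G = gen[OF this]
    have E1: "(v + t *\<^sub>R u) \<bullet> (M *v (v + t *\<^sub>R u))
       = v \<bullet> (M *v v) + t * (v \<bullet> (M *v u)) + t * (u \<bullet> (M *v v)) + t*t * (u \<bullet> (M *v u))"
      by (simp add: matrix_vector_right_distrib matrix_vector_mult_scaleR inner_add_left inner_add_right algebra_simps)
    have E2: "v \<bullet> (M *v u) = u \<bullet> (M *v v)"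
      using inner_mv_sym[OF sym, of v u] by (simp add: inner_commute)
    have E3: "(v + t *\<^sub>R u) \<bullet> (v + t *\<^sub>R u) = v \<bullet> v + 2 * t * (u \<bullet> v) + t * t * (u \<bullet> u)"
      by (simp add: inner_add_left inner_add_right inner_commute algebra_simps)
    have "\<mu> + 2 * t * (u \<bullet> (M *v v)) + t*t * (u \<bullet> (M *v u)) = (v + t *\<^sub>R u) \<bullet> (M *v (v + t *\<^sub>R u))"
      unfolding E1 E2 \<mu>_def by simp
    also have "\<dots> \<le> \<mu> * ((v + t *\<^sub>R u) \<bullet> (v + t *\<^sub>R u))" by (rule G)
    also have "\<dots> = \<mu> * (1 + 2 * t * (u \<bullet> v) + t * t * (u \<bullet> u))" unfolding E3 vv ..
    finally have "\<mu> + 2 * t * (u \<bullet> (M *v v)) + t*t * (u \<bullet> (M *v u))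
        \<le> \<mu> * (1 + 2 * t * (u \<bullet> v) + t * t * (u \<bullet> u))" .
    then have "2 * t * (u \<bullet> (M *v v) - \<mu> * (u \<bullet> v)) + t*t * c \<le> 0"
      by (simp add: c_def algebra_simps)
    then show ?thesis using uv by (simp add: power2_eq_square)
  qed
  have "u \<bullet> u = 0"
  proof (rule ccontr)
    assume "u \<bullet> u \<noteq> 0"
    then have a0: "u \<bullet> u > 0" by (simp add: order_less_le)
    define t where "t = (u \<bullet> u) / (\<bar>c\<bar> + 1)"
    have t0: "t > 0" using a0 by (simp add: t_def)
    have "t * (2 * (u \<bullet> u) + t * c) \<le> 0" using key[of t] by (simp add: power2_eq_square algebra_simps)
    then have "2 * (u \<bullet> u) + t * c \<le> 0" using t0 by (simp add: mult_le_0_iff)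
    moreover have "t * \<bar>c\<bar> < u \<bullet> u"
    proof -
      have "t * \<bar>c\<bar> = (u \<bullet> u) * (\<bar>c\<bar> / (\<bar>c\<bar> + 1))" by (simp add: t_def)
      also have "\<dots> < (u \<bullet> u) * 1" using a0 by (intro mult_strict_left_mono) auto
      finally show ?thesis by simp
    qed
    moreover have "- (t * \<bar>c\<bar>) \<le> t * c" using mult_left_mono[of "-\<bar>c\<bar>" c t] t0 by simp
    ultimately show False using a0 by linarith
  qed
  then have "u = 0" by simp
  then have "M *v v = \<mu> *\<^sub>R v" by (simp add: u_def)
  moreover have "\<forall>x\<in>V. norm x = 1 \<longrightarrow> x \<bullet> (M *v x) \<le> \<mu>"
  proof (intro ballI impI)
    fix x assume x: "x \<in> V" "norm x = 1"
    then have "x \<bullet> x = 1" by (simp add: dot_square_norm)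
    then show "x \<bullet> (M *v x) \<le> \<mu>" using gen[OF x(1)] by simp
  qed
  ultimately show ?thesis using vV nv by (auto simp: \<mu>_def)
qed


lemma eig_basis:
  fixes S :: "real^'n^'n"
  assumes sym: "transpose S = S"
  shows "\<exists>B. pairwise orthogonal B \<and> (\<forall>b\<in>B. norm b = 1 \<and> S *v b = (b \<bullet> (S *v b)) *\<^sub>R b) \<and> span B = UNIV"
proof -
  define F where "F = {B. pairwise orthogonal B \<and> (\<forall>b\<in>B. norm b = 1 \<and> S *v b = (b \<bullet> (S *v b)) *\<^sub>R b)}"
  have finF: "finite B \<and> card B \<le> DIM(real^'n)" if "B \<in> F" for B
  proof -
    have "0 \<notin> B" using that by (auto simp: F_def)
    then have "independent B" using that pairwise_orthogonal_independent by (auto simp: F_def)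
    then show ?thesis by (rule independent_bound)
  qed
  have "{} \<in> F" by (simp add: F_def)
  moreover have "\<forall>B. B \<in> F \<longrightarrow> card B < DIM(real^'n) + 1" using finF by (simp add: less_Suc_eq_le)
  ultimately obtain B where BF: "B \<in> F" and Bmax: "\<And>B'. B' \<in> F \<Longrightarrow> card B' \<le> card B"
    using ex_has_greatest_nat[of "\<lambda>B. B \<in> F" "{}" card "DIM(real^'n) + 1"] by blast
  have orthB: "pairwise orthogonal B" and eB: "\<And>b. b \<in> B \<Longrightarrow> norm b = 1 \<and> S *v b = (b \<bullet> (S *v b)) *\<^sub>R b"
    using BF by (auto simp: F_def)
  have finB: "finite B" using finF[OF BF] by simp
  have "span B = UNIV"
  proof (rule ccontr)
    assume "span B \<noteq> UNIV"
    then obtain x where x: "x \<notin> span B" by auto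
    define y where "y = x - (\<Sum>b\<in>B. (b \<bullet> x / (b \<bullet> b)) *\<^sub>R b)"
    have yorth: "orthogonal z y" if "z \<in> span B" for z
      using Gram_Schmidt_step[OF orthB that, of x] by (simp add: y_def)
    have "y \<noteq> 0"
    proof
      assume "y = 0"
      then have "x = (\<Sum>b\<in>B. (b \<bullet> x / (b \<bullet> b)) *\<^sub>R b)" by (simp add: y_def)
      moreover have "(\<Sum>b\<in>B. (b \<bullet> x / (b \<bullet> b)) *\<^sub>R b) \<in> span B"
        by (intro span_sum span_mul span_base)
      ultimately show False using x by simp
    qed
    define V where "V = {z. \<forall>b\<in>B. orthogonal b z}"
    have subV: "subspace V" unfolding V_def by (rule subspace_orthogonal_to_vectors)
    have yV: "y \<in> V" unfolding V_def using yorth span_base by blast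
    have invV: "S *v z \<in> V" if "z \<in> V" for z
    proof -
      have "orthogonal b (S *v z)" if "b \<in> B" for b
      proof -
        have "b \<bullet> (S *v z) = (S *v b) \<bullet> z" by (rule inner_mv_sym[OF sym])
        also have "\<dots> = (b \<bullet> (S *v b)) * (b \<bullet> z)" using eB[OF that] by (metis inner_scaleR_left)
        also have "b \<bullet> z = 0" using \<open>z \<in> V\<close> that by (auto simp: V_def orthogonal_def)
        finally show ?thesis by (simp add: orthogonal_def)
      qed
      then show ?thesis by (simp add: V_def)
    qed
    obtain v where vV: "v \<in> V" and nv: "norm v = 1" and ev: "S *v v = (v \<bullet> (S *v v)) *\<^sub>R v"
      using rayleigh[OF sym subV yV \<open>y \<noteq> 0\<close> invV] by blast
    have vB: "v \<notin> B"
    proof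
      assume "v \<in> B"
      then have "orthogonal v v" using vV by (auto simp: V_def)
      then show False using nv by (simp add: orthogonal_def)
    qed
    have "insert v B \<in> F"
      unfolding F_def
    proof (intro CollectI conjI ballI)
      show "pairwise orthogonal (insert v B)"
        using orthB vV unfolding pairwise_insert V_def by (auto simp: orthogonal_commute)
    next
      fix b assume "b \<in> insert v B"
      then show "norm b = 1" "S *v b = (b \<bullet> (S *v b)) *\<^sub>R b" using eB nv ev by auto
    qed
    from Bmax[OF this] show False using vB finB by simp
  qed
  then show ?thesis using orthB eB by blast
qed


lemma sqrt_exists:
  fixes S :: "real^'n^'n"
  assumes sym: "transpose S = S" and nn: "\<And>x. 0 \<le> x \<bullet> (S *v x)"
  shows "\<exists>P. psd P \<and> P ** P = S"
proof -
  obtain B where orthB: "pairwise orthogonal B"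
    and eB: "\<And>b. b \<in> B \<Longrightarrow> norm b = 1 \<and> S *v b = (b \<bullet> (S *v b)) *\<^sub>R b"
    and spB: "span B = UNIV"
    using eig_basis[OF sym] by blast
  have finB: "finite B" using orthB pairwise_orthogonal_imp_finite by blast
  define \<mu> where "\<mu> b = b \<bullet> (S *v b)" for b
  have mu0: "0 \<le> \<mu> b" for b using nn by (simp add: \<mu>_def)
  have Sb: "S *v b = \<mu> b *\<^sub>R b" if "b \<in> B" for b using eB[OF that] by (simp add: \<mu>_def)
  have bc: "b \<bullet> c = (if b = c then 1 else 0)" if "b \<in> B" "c \<in> B" for b c
  proof (cases "b = c")
    case True then show ?thesis using eB[OF that(1)] by (simp add: dot_square_norm)
  next
    case False then show ?thesis using orthB that by (auto simp: pairwise_def orthogonal_def)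
  qed
  define P :: "real^'n^'n" where "P = (\<chi> i j. \<Sum>b\<in>B. sqrt (\<mu> b) * b$i * b$j)"
  have Pv: "P *v x = (\<Sum>b\<in>B. (sqrt (\<mu> b) * (b \<bullet> x)) *\<^sub>R b)" for x
    by (simp add: vec_eq_iff P_def matrix_vector_mult_def inner_vec_def sum_distrib_left
        sum_distrib_right sum.swap[of _ B] mult_ac)
  have symP: "transpose P = P"
    by (simp add: vec_eq_iff P_def transpose_def mult_ac)
  have bPx: "b \<bullet> (P *v x) = sqrt (\<mu> b) * (b \<bullet> x)" if "b \<in> B" for b x
  proof -
    have "b \<bullet> (P *v x) = (\<Sum>c\<in>B. sqrt (\<mu> c) * (c \<bullet> x) * (b \<bullet> c))"
      by (simp add: Pv inner_sum_right)
    also have "\<dots> = (\<Sum>c\<in>B. if c = b then sqrt (\<mu> c) * (c \<bullet> x) else 0)"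
      by (rule sum.cong) (auto simp: bc that)
    also have "\<dots> = sqrt (\<mu> b) * (b \<bullet> x)" using finB that by simp
    finally show ?thesis .
  qed
  have PPx: "P *v (P *v x) = (\<Sum>b\<in>B. (\<mu> b * (b \<bullet> x)) *\<^sub>R b)" for x
  proof -
    have "P *v (P *v x) = (\<Sum>b\<in>B. (sqrt (\<mu> b) * (b \<bullet> (P *v x))) *\<^sub>R b)" by (rule Pv)
    also have "\<dots> = (\<Sum>b\<in>B. (\<mu> b * (b \<bullet> x)) *\<^sub>R b)"
      by (rule sum.cong) (auto simp: bPx mu0 mult.assoc[symmetric])
    finally show ?thesis .
  qed
  have Sx: "S *v x = (\<Sum>b\<in>B. (\<mu> b * (b \<bullet> x)) *\<^sub>R b)" for x
  proof -
    have "x = (\<Sum>b\<in>B. (x \<bullet> b) *\<^sub>R b)"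
      using orthonormal_basis_expand[OF orthB _ _ finB, of x] eB spB by auto
    then have "S *v x = S *v (\<Sum>b\<in>B. (x \<bullet> b) *\<^sub>R b)" by simp
    also have "\<dots> = (\<Sum>b\<in>B. S *v ((x \<bullet> b) *\<^sub>R b))"
      by (simp add: linear_sum[OF matrix_vector_mul_linear] o_def)
    also have "\<dots> = (\<Sum>b\<in>B. (\<mu> b * (b \<bullet> x)) *\<^sub>R b)"
      by (rule sum.cong) (auto simp: matrix_vector_mult_scaleR Sb inner_commute)
    finally show ?thesis .
  qed
  have "P ** P = S"
    by (rule matrix_eq[THEN iffD2]) (simp add: matrix_vector_mul_assoc[symmetric] PPx Sx)
  moreover have "psd P"
    unfolding psd_def
  proof (intro conjI allI)
    show "transpose P = P" by (rule symP)
    fix x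
    have "x \<bullet> (P *v x) = (\<Sum>b\<in>B. sqrt (\<mu> b) * (b \<bullet> x) * (b \<bullet> x))"
      by (simp add: Pv inner_sum_right inner_commute)
    also have "\<dots> \<ge> 0" by (intro sum_nonneg) (simp add: mu0 mult.assoc)
    finally show "0 \<le> x \<bullet> (P *v x)" .
  qed
  ultimately show ?thesis by blast
qed


lemma eig_gap:
  fixes N P :: "real^'n^'n"
  assumes N: "psd N" and P: "psd P" and nv: "norm v = 1" and ev: "(N - P) *v v = \<mu> *\<^sub>R v"
  shows "\<mu>^2 \<le> \<bar>v \<bullet> ((N ** N - P ** P) *v v)\<bar>"
proof -
  have sN: "transpose N = N" and nN: "0 \<le> v \<bullet> (N *v v)" using N by (auto simp: psd_def)
  have sP: "transpose P = P" and nP: "0 \<le> v \<bullet> (P *v v)" using P by (auto simp: psd_def)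
  have vv: "v \<bullet> v = 1" using nv by (simp add: dot_square_norm)
  have q: "v \<bullet> ((N ** N - P ** P) *v v) = (N *v v) \<bullet> (N *v v) - (P *v v) \<bullet> (P *v v)"
    by (simp add: matrix_vector_mult_diff_rdistrib matrix_vector_mul_assoc[symmetric] inner_diff_right
        inner_mv_sym[OF sN, of v] inner_mv_sym[OF sP, of v])
  have NP: "N *v v = P *v v + \<mu> *\<^sub>R v" using ev by (simp add: matrix_vector_mult_diff_rdistrib algebra_simps)
  show ?thesis
  proof (cases "\<mu> \<ge> 0")
    case True
    have "v \<bullet> ((N ** N - P ** P) *v v) = 2 * \<mu> * (v \<bullet> (P *v v)) + \<mu>^2"
      unfolding q NP using vv by (simp add: inner_add_left inner_add_right inner_commute power2_eq_square algebra_simps)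
    moreover have "0 \<le> 2 * \<mu> * (v \<bullet> (P *v v))" using True nP by simp
    ultimately show ?thesis by simp
  next
    case False
    have PN: "P *v v = N *v v - \<mu> *\<^sub>R v" using NP by simp
    have "v \<bullet> ((N ** N - P ** P) *v v) = 2 * \<mu> * (v \<bullet> (N *v v)) - \<mu>^2"
      unfolding q PN using vv by (simp add: inner_diff_left inner_diff_right inner_commute power2_eq_square algebra_simps)
    moreover have "2 * \<mu> * (v \<bullet> (N *v v)) \<le> 0" using False nN by (simp add: mult_nonpos_nonneg)
    ultimately show ?thesis by simp
  qed
qed

lemma psd_form_bound:
  fixes N P :: "real^'n^'n"
  assumes N: "psd N" and P: "psd P"
    and e: "\<And>x. norm x = 1 \<Longrightarrow> \<bar>x \<bullet> ((N ** N - P ** P) *v x)\<bar> \<le> e"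
    and x: "norm x = 1"
  shows "\<bar>x \<bullet> ((N - P) *v x)\<bar> \<le> sqrt e"
proof -
  have one: "x \<bullet> ((N - P) *v x) \<le> sqrt e" if N: "psd N" and P: "psd P"
    and e: "\<And>x. norm x = 1 \<Longrightarrow> \<bar>x \<bullet> ((N ** N - P ** P) *v x)\<bar> \<le> e"
    and x: "norm x = 1" for N P :: "real^'n^'n" and x
  proof -
    have sym: "transpose (N - P) = N - P" using N P by (simp add: psd_def transpose_def vec_eq_iff)
    have "axis undefined 1 \<noteq> (0::real^'n)" by (simp add: axis_eq_0_iff)
    then obtain v where nv: "norm v = 1" and ev: "(N - P) *v v = (v \<bullet> ((N - P) *v v)) *\<^sub>R v"
      and vmax: "\<forall>y. norm y = 1 \<longrightarrow> y \<bullet> ((N - P) *v y) \<le> v \<bullet> ((N - P) *v v)"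
      using rayleigh[OF sym subspace_UNIV, of "axis undefined 1"] by auto
    define \<mu> where "\<mu> = v \<bullet> ((N - P) *v v)"
    have "\<mu>^2 \<le> e" using eig_gap[OF N P nv ev[folded \<mu>_def]] e[OF nv] by linarith
    then have "\<bar>\<mu>\<bar> \<le> sqrt e" using real_le_rsqrt by (metis power2_abs)
    then have "\<mu> \<le> sqrt e" by linarith
    then show ?thesis using vmax x by (auto simp: \<mu>_def)
  qed
  have a: "x \<bullet> ((N - P) *v x) \<le> sqrt e" by (rule one[OF N P e x])
  have e': "\<bar>y \<bullet> ((P ** P - N ** N) *v y)\<bar> \<le> e" if "norm y = 1" for y
  proof -
    have "y \<bullet> ((P ** P - N ** N) *v y) = - (y \<bullet> ((N ** N - P ** P) *v y))"
      by (simp add: matrix_vector_mult_diff_rdistrib inner_diff_right)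
    then show ?thesis using e[OF that] by simp
  qed
  have b: "x \<bullet> ((P - N) *v x) \<le> sqrt e" by (rule one[OF P N e' x])
  have "x \<bullet> ((P - N) *v x) = - (x \<bullet> ((N - P) *v x))"
    by (simp add: matrix_vector_mult_diff_rdistrib inner_diff_right)
  then show ?thesis using a b by linarith
qed

lemma psd_sqrt_unique:
  fixes N P :: "real^'n^'n"
  assumes N: "psd N" and P: "psd P" and eq: "N ** N = P ** P"
  shows "N = P"
proof -
  have sym: "transpose (N - P) = N - P" using N P by (simp add: psd_def transpose_def vec_eq_iff)
  have z1: "x \<bullet> ((N - P) *v x) = 0" if "norm x = 1" for x
    using psd_form_bound[OF N P _ that, of 0] eq by simp
  have z: "x \<bullet> ((N - P) *v x) = 0" for x
  proof (cases "x = 0")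
    case True then show ?thesis by simp
  next
    case False
    have "norm (x /\<^sub>R norm x) = 1" using False by simp
    from z1[OF this] have "(x \<bullet> ((N - P) *v x)) / (norm x)^2 = 0"
      by (simp add: matrix_vector_mult_scaleR power2_eq_square divide_inverse mult_ac)
    then show ?thesis using False by simp
  qed
  have "(N - P) *v x = 0" for x
    by (rule psd_zero[OF sym]) (simp_all add: z)
  then have "N - P = 0" using matrix_eq[of "N - P" 0] by simp
  then show ?thesis by simp
qed

lemma msqrt_props:
  fixes S :: "real^'n^'n"
  assumes sym: "transpose S = S" and nn: "\<And>x. 0 \<le> x \<bullet> (S *v x)"
  shows "psd (msqrt S) \<and> msqrt S ** msqrt S = S"
proof -
  have "\<exists>!P. psd P \<and> P ** P = S"
    using sqrt_exists[OF sym nn] psd_sqrt_unique by metis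
  then show ?thesis unfolding msqrt_def by (rule theI')
qed


lemma trace_bound:
  fixes N P :: "real^'n^'n"
  assumes N: "psd N" and P: "psd P"
    and e: "\<And>x. norm x = 1 \<Longrightarrow> \<bar>x \<bullet> ((N ** N - P ** P) *v x)\<bar> \<le> e"
  shows "\<bar>trace (N - P)\<bar> \<le> CARD('n) * sqrt e"
proof -
  have "trace (N - P) = (\<Sum>i\<in>UNIV. axis i 1 \<bullet> ((N - P) *v axis i 1))"
    by (simp add: trace_def axis_diag)
  then have "\<bar>trace (N - P)\<bar> \<le> (\<Sum>i\<in>(UNIV::'n set). \<bar>axis i 1 \<bullet> ((N - P) *v axis i 1)\<bar>)"
    by (simp add: sum_abs)
  also have "\<dots> \<le> (\<Sum>i\<in>(UNIV::'n set). sqrt e)"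
  proof (rule sum_mono)
    fix i :: 'n
    have "norm (axis i (1::real)) = 1" by simp
    note th = psd_form_bound[OF N P e this]
    then show "\<bar>axis i 1 \<bullet> ((N - P) *v axis i 1)\<bar> \<le> sqrt e" by simp
  qed
  finally show ?thesis by simp
qed


lemma mm_add_r: "((A::real^'b^'a) + B) ** (C::real^'c^'b) = A ** C + B ** C"
  by (vector matrix_matrix_mult_def sum.distrib[symmetric] field_simps)

lemma mm_diff_l: "(A::real^'b^'a) ** ((B::real^'c^'b) - C) = A ** B - A ** C"
  by (vector matrix_matrix_mult_def sum_subtractf[symmetric] field_simps)

lemma mm_diff_r: "((A::real^'b^'a) - B) ** (C::real^'c^'b) = A ** C - B ** C"
  by (vector matrix_matrix_mult_def sum_subtractf[symmetric] field_simps)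

lemma frob_norm_eq: "frob_norm (M::real^'c^'r) = norm M"
  by (simp add: frob_norm_def norm_eq_sqrt_inner inner_vec_def power2_eq_square)

lemma inner_mm: "(transpose X ** Y) \<bullet> (S::real^'c^'b) = (Y::real^'c^'a) \<bullet> ((X::real^'b^'a) ** S)"
  by (simp add: inner_vec_def matrix_matrix_mult_def transpose_def sum_distrib_left sum_distrib_right
      sum.swap[of _ "UNIV::'a set"] mult_ac)
    (rule sum.cong[OF refl], rule sum.swap)

lemma inner_transpose: "transpose X \<bullet> transpose Y = (X::real^'c^'r) \<bullet> Y"
  by (simp add: inner_vec_def transpose_def sum.swap[of _ "UNIV::'r set"])

lemma trace_mt: "trace (X ** transpose Y) = (X::real^'c^'r) \<bullet> Y"
  by (simp add: inner_vec_def trace_def matrix_matrix_mult_def transpose_def)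

lemma trace_tm: "trace (transpose X ** Y) = (X::real^'c^'r) \<bullet> Y"
  by (simp add: inner_vec_def trace_def matrix_matrix_mult_def transpose_def sum.swap[of _ "UNIV::'r set"])

lemma bb_mm: "bounded_bilinear ((**) :: real^'b^'a \<Rightarrow> real^'c^'b \<Rightarrow> real^'c^'a)"
proof -
  have "bilinear ((**) :: real^'b^'a \<Rightarrow> real^'c^'b \<Rightarrow> real^'c^'a)"
    unfolding bilinear_def linear_iff
    by (simp add: matrix_add_ldistrib mm_add_r matrix_scalar_ac scalar_matrix_assoc)
  then show ?thesis by (simp add: bilinear_conv_bounded_bilinear)
qed

lemma bl_transpose: "bounded_linear (transpose :: real^'c^'r \<Rightarrow> real^'r^'c)"
proof -
  have "linear (transpose :: real^'c^'r \<Rightarrow> real^'r^'c)"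
    unfolding linear_iff by (simp add: transpose_def vec_eq_iff)
  then show ?thesis by (simp add: linear_conv_bounded_linear)
qed

lemma bb_mv: "bounded_bilinear ((*v) :: real^'b^'a \<Rightarrow> real^'b \<Rightarrow> real^'a)"
proof -
  have "bilinear ((*v) :: real^'b^'a \<Rightarrow> real^'b \<Rightarrow> real^'a)"
    unfolding bilinear_def linear_iff
    by (simp add: matrix_vector_right_distrib matrix_vector_mult_add_rdistrib matrix_vector_mult_scaleR
        vec_eq_iff matrix_vector_mult_def sum_distrib_left sum.distrib algebra_simps)
  then show ?thesis by (simp add: bilinear_conv_bounded_bilinear)
qed

lemma norm_transpose: "norm (transpose X) = norm (X::real^'c^'r)"
  by (simp add: norm_eq_sqrt_inner inner_transpose)

lemma abs_trace_le: "\<bar>trace (X::real^'n^'n)\<bar> \<le> CARD('n) * norm X"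
proof -
  have "\<bar>trace X\<bar> \<le> (\<Sum>i\<in>(UNIV::'n set). \<bar>X$i$i\<bar>)" by (simp add: trace_def sum_abs)
  also have "\<dots> \<le> (\<Sum>i\<in>(UNIV::'n set). norm X)"
  proof (rule sum_mono)
    fix i
    have "\<bar>X$i$i\<bar> \<le> norm (X$i)" using component_le_norm_cart[of "X$i" i] by simp
    also have "\<dots> \<le> norm X" by (rule Finite_Cartesian_Product.norm_nth_le)
    finally show "\<bar>X$i$i\<bar> \<le> norm X" .
  qed
  finally show ?thesis by simp
qed


lemma grad_identity:
  fixes L :: "real^'n^'m \<Rightarrow> real" and A GA :: "real^'r^'m" and B GB :: "real^'r^'n"
  assumes Ld: "L differentiable (at (A ** transpose B))"
    and GA: "((\<lambda>X. L_L2 L lam X B) has_derivative (\<lambda>H. GA \<bullet> H)) (at A)"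
    and GB: "((\<lambda>Y. L_L2 L lam A Y) has_derivative (\<lambda>H. GB \<bullet> H)) (at B)"
  shows "transpose A ** GA - transpose GB ** B = lam *\<^sub>R (transpose A ** A - transpose B ** B)"
proof -
  obtain L' where dL: "(L has_derivative L') (at (A ** transpose B))"
    using Ld by (auto simp: differentiable_def)
  have f1: "(\<lambda>X. L_L2 L lam X B) = (\<lambda>X. L (X ** transpose B) + lam/2 * (X \<bullet> X + B \<bullet> B))"
    by (simp add: L_L2_def frob_norm_eq power2_norm_eq_inner)
  have f2: "(\<lambda>Y. L_L2 L lam A Y) = (\<lambda>Y. L (A ** transpose Y) + lam/2 * (A \<bullet> A + Y \<bullet> Y))"
    by (simp add: L_L2_def frob_norm_eq power2_norm_eq_inner)
  have bl1: "bounded_linear (\<lambda>X::real^'r^'m. X ** transpose B)"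
    by (rule bounded_bilinear.bounded_linear_left[OF bb_mm])
  have bl2: "bounded_linear (\<lambda>Y::real^'r^'n. A ** transpose Y)"
    using bounded_linear_compose[OF bounded_bilinear.bounded_linear_right[OF bb_mm, of A] bl_transpose]
    by (simp add: o_def)
  have d1: "((\<lambda>X. L (X ** transpose B)) has_derivative (\<lambda>H. L' (H ** transpose B))) (at A)"
    using has_derivative_compose[OF bounded_linear_imp_has_derivative[OF bl1] dL] by simp
  have d2: "((\<lambda>Y. L (A ** transpose Y)) has_derivative (\<lambda>H. L' (A ** transpose H))) (at B)"
    using has_derivative_compose[OF bounded_linear_imp_has_derivative[OF bl2] dL] by simp
  have D1: "((\<lambda>X. L_L2 L lam X B) has_derivative (\<lambda>H. L' (H ** transpose B) + lam/2 * (A \<bullet> H + H \<bullet> A))) (at A)"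
    unfolding f1 by (rule has_derivative_add[OF d1]) (auto intro!: derivative_eq_intros)
  have D2: "((\<lambda>Y. L_L2 L lam A Y) has_derivative (\<lambda>H. L' (A ** transpose H) + lam/2 * (B \<bullet> H + H \<bullet> B))) (at B)"
    unfolding f2 by (rule has_derivative_add[OF d2]) (auto intro!: derivative_eq_intros)
  have EA: "GA \<bullet> H = L' (H ** transpose B) + lam * (A \<bullet> H)" for H
  proof -
    have "GA \<bullet> H = L' (H ** transpose B) + lam/2 * (A \<bullet> H + H \<bullet> A)"
      using fun_cong[OF has_derivative_unique[OF GA D1], of H] by simp
    then show ?thesis by (simp add: inner_commute[of H A])
  qed
  have EB: "GB \<bullet> H = L' (A ** transpose H) + lam * (B \<bullet> H)" for H
  proof -
    have "GB \<bullet> H = L' (A ** transpose H) + lam/2 * (B \<bullet> H + H \<bullet> B)"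
      using fun_cong[OF has_derivative_unique[OF GB D2], of H] by simp
    then show ?thesis by (simp add: inner_commute[of H B])
  qed
  define Z where "Z = transpose A ** GA - transpose GB ** B - lam *\<^sub>R (transpose A ** A - transpose B ** B)"
  have "Z \<bullet> S = 0" for S
  proof -
    have a: "(transpose A ** GA) \<bullet> S = L' (A ** (S ** transpose B)) + lam * ((transpose A ** A) \<bullet> S)"
      by (simp add: inner_mm EA matrix_mul_assoc)
    have "(transpose GB ** B) \<bullet> S = (transpose B ** GB) \<bullet> transpose S"
      by (metis inner_transpose matrix_transpose_mul transpose_transpose)
    also have "\<dots> = GB \<bullet> (B ** transpose S)" by (rule inner_mm)
    also have "\<dots> = L' (A ** (S ** transpose B)) + lam * ((transpose B ** B) \<bullet> transpose S)"
      by (simp add: EB inner_mm matrix_transpose_mul)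
    also have "(transpose B ** B) \<bullet> transpose S = (transpose B ** B) \<bullet> S"
      by (metis inner_transpose matrix_transpose_mul transpose_transpose)
    finally have b: "(transpose GB ** B) \<bullet> S = L' (A ** (S ** transpose B)) + lam * ((transpose B ** B) \<bullet> S)" .
    show ?thesis unfolding Z_def using a b by (simp add: inner_diff_left algebra_simps)
  qed
  from this[of Z] have "Z = 0" by simp
  then show ?thesis by (simp add: Z_def)
qed


lemma transpose_diff: "transpose ((X::real^'c^'r) - Y) = transpose X - transpose Y"
  by (simp add: transpose_def vec_eq_iff)

lemma transpose_add: "transpose ((X::real^'c^'r) + Y) = transpose X + transpose Y"
  by (simp add: transpose_def vec_eq_iff)

lemma mm_neg_r: "(X::real^'b^'a) ** (- (Y::real^'c^'b)) = - (X ** Y)"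
  by (vector matrix_matrix_mult_def sum_negf[symmetric])

lemma mm_neg_l: "(- (X::real^'b^'a)) ** (Y::real^'c^'b) = - (X ** Y)"
  by (vector matrix_matrix_mult_def sum_negf[symmetric])

lemma transpose_neg: "transpose (- (X::real^'c^'r)) = - transpose X"
  by (simp add: transpose_def vec_eq_iff)

lemma D_decay:
  fixes A :: "real \<Rightarrow> real^'r^'m" and B :: "real \<Rightarrow> real^'r^'n"
    and GA :: "real \<Rightarrow> real^'r^'m" and GB :: "real \<Rightarrow> real^'r^'n"
  assumes tau: "\<tau> > 0"
    and flowA: "\<And>t. t \<ge> 0 \<Longrightarrow> (A has_vector_derivative (- (1/\<tau>) *\<^sub>R GA t)) (at t within {0..})"
    and flowB: "\<And>t. t \<ge> 0 \<Longrightarrow> (B has_vector_derivative (- (1/\<tau>) *\<^sub>R GB t)) (at t within {0..})"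
    and ident: "\<And>t. t \<ge> 0 \<Longrightarrow> transpose (A t) ** GA t - transpose (GB t) ** B t
                  = lam *\<^sub>R (transpose (A t) ** A t - transpose (B t) ** B t)"
    and t: "t \<ge> 0"
  shows "transpose (A t) ** A t - transpose (B t) ** B t
         = exp (- (2 * lam / \<tau>) * t) *\<^sub>R (transpose (A 0) ** A 0 - transpose (B 0) ** B 0)"
proof -
  define D where "D s = transpose (A s) ** A s - transpose (B s) ** B s" for s
  define k where "k = 2 * lam / \<tau>"
  have symD: "transpose (D s) = D s" for s
    by (simp add: D_def transpose_diff matrix_transpose_mul)
  have tv: "((\<lambda>s. transpose (X s)) has_vector_derivative transpose X') (at s within {0..})"
    if "(X has_vector_derivative X') (at s within {0..})" for X :: "real \<Rightarrow> real^'r^'c" and X' s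
    using bounded_linear.has_vector_derivative[OF bl_transpose that] .
  have dD: "(D has_vector_derivative (- k) *\<^sub>R D s) (at s within {0..})" if s: "s \<ge> 0" for s
  proof -
    have hA: "((\<lambda>s. transpose (A s) ** A s) has_vector_derivative
        (transpose (A s) ** (- (1/\<tau>) *\<^sub>R GA s) + transpose (- (1/\<tau>) *\<^sub>R GA s) ** A s)) (at s within {0..})"
      by (rule bounded_bilinear.has_vector_derivative[OF bb_mm tv[OF flowA[OF s]] flowA[OF s]])
    have hB: "((\<lambda>s. transpose (B s) ** B s) has_vector_derivative
        (transpose (B s) ** (- (1/\<tau>) *\<^sub>R GB s) + transpose (- (1/\<tau>) *\<^sub>R GB s) ** B s)) (at s within {0..})"
      by (rule bounded_bilinear.has_vector_derivative[OF bb_mm tv[OF flowB[OF s]] flowB[OF s]])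
    have I1: "transpose (A s) ** GA s - transpose (GB s) ** B s = lam *\<^sub>R D s"
      using ident[OF s] by (simp add: D_def)
    have I2: "transpose (GA s) ** A s - transpose (B s) ** GB s = lam *\<^sub>R D s"
    proof -
      have "transpose (transpose (A s) ** GA s - transpose (GB s) ** B s) = transpose (lam *\<^sub>R D s)"
        using I1 by simp
      then show ?thesis by (simp add: transpose_diff matrix_transpose_mul transpose_scalar symD)
    qed
    have "(transpose (A s) ** (- (1/\<tau>) *\<^sub>R GA s) + transpose (- (1/\<tau>) *\<^sub>R GA s) ** A s)
        - (transpose (B s) ** (- (1/\<tau>) *\<^sub>R GB s) + transpose (- (1/\<tau>) *\<^sub>R GB s) ** B s)
        = (- (1/\<tau>)) *\<^sub>R ((transpose (A s) ** GA s - transpose (GB s) ** B s)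
              + (transpose (GA s) ** A s - transpose (B s) ** GB s))"
      by (simp add: transpose_scalar matrix_scalar_ac scalar_matrix_assoc[symmetric] mm_neg_r mm_neg_l transpose_neg algebra_simps)
    also have "\<dots> = (- k) *\<^sub>R D s"
      unfolding I1 I2 k_def using tau by (simp add: scaleR_add_left[symmetric])
    finally have eq: "(transpose (A s) ** (- (1/\<tau>) *\<^sub>R GA s) + transpose (- (1/\<tau>) *\<^sub>R GA s) ** A s)
        - (transpose (B s) ** (- (1/\<tau>) *\<^sub>R GB s) + transpose (- (1/\<tau>) *\<^sub>R GB s) ** B s) = (- k) *\<^sub>R D s" .
    show ?thesis
      using has_vector_derivative_diff[OF hA hB] unfolding eq D_def[abs_def] .
  qed
  define E where "E s = exp (k * s) *\<^sub>R D s" for s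
  have dE: "(E has_derivative (\<lambda>h. 0)) (at s within {0..})" if "s \<in> {0..}" for s
  proof -
    have "((\<lambda>s. exp (k * s)) has_field_derivative (k * exp (k * s))) (at s within {0..})"
      by (auto intro!: derivative_eq_intros)
    from has_vector_derivative_scaleR[OF this dD] that
    have h: "(E has_vector_derivative (exp (k * s) *\<^sub>R (- k) *\<^sub>R D s + (k * exp (k * s)) *\<^sub>R D s)) (at s within {0..})"
      by (simp add: E_def[abs_def])
    have z: "exp (k * s) *\<^sub>R (- k) *\<^sub>R D s + (k * exp (k * s)) *\<^sub>R D s = 0"
      by (simp add: algebra_simps)
    from h[unfolded z] show ?thesis by (simp add: has_vector_derivative_def)
  qed
  obtain c where "\<forall>s\<in>{0..}. E s = c"
    using has_derivative_zero_constant[OF convex_real_interval(1) dE] by blast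
  then have "E t = E 0" using t by simp
  then have "exp (k * t) *\<^sub>R D t = D 0" by (simp add: E_def)
  then have "D t = exp (- k * t) *\<^sub>R D 0"
    by (metis (no_types, lifting) exp_minus_inverse mult_minus_left scaleR_one scaleR_scaleR mult.commute)
  then show ?thesis by (simp add: D_def k_def)
qed


theorem theorem2:
  fixes L :: "real^'n^'m \<Rightarrow> real"
    and lam \<tau> :: real
    and A :: "real \<Rightarrow> real^'r^'m" and B :: "real \<Rightarrow> real^'r^'n"
    and GA :: "real \<Rightarrow> real^'r^'m" and GB :: "real \<Rightarrow> real^'r^'n"
  assumes dims: "CARD('r) \<le> CARD('m)" "CARD('r) \<le> CARD('n)"
    and L_diff: "\<And>X. L differentiable (at X)"
    and lam: "lam > 0" and tau: "\<tau> > 0"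
    and GA: "\<And>t. t \<ge> 0 \<Longrightarrow>
               ((\<lambda>X. L_L2 L lam X (B t)) has_derivative (\<lambda>H. GA t \<bullet> H)) (at (A t))"
    and GB: "\<And>t. t \<ge> 0 \<Longrightarrow>
               ((\<lambda>Y. L_L2 L lam (A t) Y) has_derivative (\<lambda>H. GB t \<bullet> H)) (at (B t))"
    and flowA: "\<And>t. t \<ge> 0 \<Longrightarrow> (A has_vector_derivative (- (1/\<tau>) *\<^sub>R GA t)) (at t within {0..})"
    and flowB: "\<And>t. t \<ge> 0 \<Longrightarrow> (B has_vector_derivative (- (1/\<tau>) *\<^sub>R GB t)) (at t within {0..})"
    and bounded: "\<exists>M. \<forall>t\<ge>0. frob_norm (A t) \<le> M \<and> frob_norm (B t) \<le> M"
  shows "\<exists>C c. C > 0 \<and> c > 0 \<and> (\<forall>t\<ge>0.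
           \<bar>L_L2 L lam (A t) (B t) - L_nuc L lam (A t ** transpose (B t))\<bar> \<le> C * exp (- c * t))"
proof -
  obtain Mb where bnd: "\<And>t. t \<ge> 0 \<Longrightarrow> norm (A t) \<le> Mb"
    using bounded by (auto simp: frob_norm_eq)
  have Mb0: "0 \<le> Mb" using bnd[of 0] norm_ge_zero[of "A 0"] by linarith
  define D where "D t = transpose (A t) ** A t - transpose (B t) ** B t" for t
  define k where "k = 2 * lam / \<tau>"
  have k0: "k > 0" using lam tau by (simp add: k_def)
  have ident: "transpose (A t) ** GA t - transpose (GB t) ** B t
                  = lam *\<^sub>R (transpose (A t) ** A t - transpose (B t) ** B t)" if "t \<ge> 0" for t
    by (rule grad_identity[OF L_diff GA[OF that] GB[OF that]])
  have decay: "D t = exp (- k * t) *\<^sub>R D 0" if "t \<ge> 0" for t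
    using D_decay[OF tau flowA flowB ident that] by (simp add: D_def k_def)
  obtain K1 where K1: "K1 > 0" "\<And>X Y. norm ((X::real^'r^'m) ** (Y::real^'r^'r)) \<le> norm X * norm Y * K1"
    using bounded_bilinear.pos_bounded[OF bb_mm] by blast
  obtain K2 where K2: "K2 > 0" "\<And>X Y. norm ((X::real^'r^'m) ** (Y::real^'m^'r)) \<le> norm X * norm Y * K2"
    using bounded_bilinear.pos_bounded[OF bb_mm] by blast
  obtain K3 where K3: "K3 > 0" "\<And>X y. norm ((X::real^'m^'m) *v (y::real^'m)) \<le> norm X * norm y * K3"
    using bounded_bilinear.pos_bounded[OF bb_mv] by blast
  define c0 where "c0 = Mb^2 * K1 * K2 * K3 * norm (D 0)"
  have c00: "0 \<le> c0" using K1 K2 K3 by (simp add: c0_def)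
  define C where "C = lam * CARD('m) * sqrt c0 + lam / 2 * CARD('r) * norm (D 0) + 1"
  have C0: "C > 0" using lam c00 by (simp add: C_def add_nonneg_pos)
  have main: "\<bar>L_L2 L lam (A t) (B t) - L_nuc L lam (A t ** transpose (B t))\<bar> \<le> C * exp (- (k/2) * t)"
    if t: "t \<ge> 0" for t
  proof -
    define At where "At = A t"
    define Bt where "Bt = B t"
    define W where "W = At ** transpose Bt"
    define S where "S = W ** transpose W"
    define P where "P = msqrt S"
    define N where "N = At ** transpose At"
    have symS: "transpose S = S" by (simp add: S_def matrix_transpose_mul)
    have nnS: "0 \<le> x \<bullet> (S *v x)" for x
      by (simp add: S_def matrix_vector_mul_assoc[symmetric] inner_mv[of x W])
    have P: "psd P" and PP: "P ** P = S" using msqrt_props[OF symS nnS] by (auto simp: P_def)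
    have N: "psd N"
      unfolding psd_def
    proof (intro conjI allI)
      show "transpose N = N" by (simp add: N_def matrix_transpose_mul)
      fix x show "0 \<le> x \<bullet> (N *v x)"
        by (simp add: N_def matrix_vector_mul_assoc[symmetric] inner_mv[of x At])
    qed
    have Dt: "D t = transpose At ** At - transpose Bt ** Bt" by (simp add: D_def At_def Bt_def)
    have Eeq: "N ** N - P ** P = (At ** D t) ** transpose At"
      by (simp add: PP Dt N_def S_def W_def mm_diff_l mm_diff_r matrix_transpose_mul matrix_mul_assoc)
    have nDt: "norm (D t) = exp (- k * t) * norm (D 0)" using decay[OF t] by simp
    have nAt: "norm At \<le> Mb" using bnd[OF t] by (simp add: At_def)
    have nE: "norm (N ** N - P ** P) \<le> Mb^2 * K1 * K2 * norm (D t)"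
    proof -
      have "norm (N ** N - P ** P) \<le> norm (At ** D t) * norm (transpose At) * K2" unfolding Eeq by (rule K2(2))
      also have "\<dots> \<le> (norm At * norm (D t) * K1) * norm At * K2"
      proof -
        have "norm (At ** D t) * norm (transpose At) \<le> (norm At * norm (D t) * K1) * norm At"
          unfolding norm_transpose by (rule mult_right_mono[OF K1(2) norm_ge_zero])
        then show ?thesis using K2(1) by (simp add: mult_right_mono)
      qed
      also have "\<dots> = (norm At)^2 * K1 * K2 * norm (D t)" by (simp add: power2_eq_square mult_ac)
      also have "\<dots> \<le> Mb^2 * K1 * K2 * norm (D t)"
        using K1 K2 nAt by (intro mult_right_mono power_mono) auto
      finally show ?thesis .
    qed
    have ebound: "\<bar>x \<bullet> ((N ** N - P ** P) *v x)\<bar> \<le> c0 * exp (- k * t)" if x: "norm x = 1" for x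
    proof -
      have "\<bar>x \<bullet> ((N ** N - P ** P) *v x)\<bar> \<le> norm x * norm ((N ** N - P ** P) *v x)"
        by (rule Cauchy_Schwarz_ineq2)
      also have "\<dots> \<le> norm (N ** N - P ** P) * K3" using K3(2)[of "N ** N - P ** P" x] x by simp
      also have "\<dots> \<le> (Mb^2 * K1 * K2 * norm (D t)) * K3" using K3 nE by (intro mult_right_mono) auto
      also have "\<dots> = c0 * exp (- k * t)" by (simp add: c0_def nDt mult_ac)
      finally show ?thesis .
    qed
    have tr: "\<bar>trace (N - P)\<bar> \<le> CARD('m) * sqrt (c0 * exp (- k * t))"
      by (rule trace_bound[OF N P ebound])
    have sq: "sqrt (c0 * exp (- k * t)) = sqrt c0 * exp (- (k/2) * t)"
    proof -
      have "exp (- k * t) = (exp (- (k/2) * t))^2" by (simp add: power2_eq_square exp_add[symmetric])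
      then show ?thesis by (simp add: real_sqrt_mult)
    qed
    have trN: "trace N = At \<bullet> At" by (simp add: N_def trace_mt)
    have trD: "trace (D t) = At \<bullet> At - Bt \<bullet> Bt" by (simp add: Dt trace_sub trace_tm)
    have gap: "L_L2 L lam (A t) (B t) - L_nuc L lam (A t ** transpose (B t))
               = lam * trace (N - P) - lam / 2 * trace (D t)"
      by (simp add: L_L2_def L_nuc_def nuclear_norm_def frob_norm_eq power2_norm_eq_inner
          trace_sub trN trD P_def S_def W_def At_def Bt_def algebra_simps)
    have ed: "exp (- k * t) \<le> exp (- (k/2) * t)" using k0 t by (simp add: mult_right_mono)
    have "\<bar>L_L2 L lam (A t) (B t) - L_nuc L lam (A t ** transpose (B t))\<bar>
        \<le> lam * \<bar>trace (N - P)\<bar> + lam / 2 * \<bar>trace (D t)\<bar>"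
    proof -
      have "\<bar>lam * trace (N - P) - lam / 2 * trace (D t)\<bar> \<le> \<bar>lam * trace (N - P)\<bar> + \<bar>lam / 2 * trace (D t)\<bar>"
        by (rule abs_triangle_ineq4)
      also have "\<dots> = lam * \<bar>trace (N - P)\<bar> + lam / 2 * \<bar>trace (D t)\<bar>" using lam by (simp add: abs_mult)
      finally show ?thesis unfolding gap .
    qed
    also have "\<dots> \<le> lam * (CARD('m) * (sqrt c0 * exp (- (k/2) * t))) + lam / 2 * (CARD('r) * norm (D t))"
      using tr sq abs_trace_le[of "D t"] lam by (intro add_mono mult_left_mono) auto
    also have "\<dots> \<le> lam * (CARD('m) * (sqrt c0 * exp (- (k/2) * t))) + lam / 2 * (CARD('r) * (norm (D 0) * exp (- (k/2) * t)))"
    proof -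
      have "norm (D t) \<le> norm (D 0) * exp (- (k/2) * t)"
        unfolding nDt using ed by (simp add: mult.commute mult_left_mono)
      then show ?thesis using lam by (intro add_mono order_refl mult_left_mono) auto
    qed
    also have "\<dots> \<le> C * exp (- (k/2) * t)"
      by (simp add: C_def algebra_simps)
    finally show ?thesis .
  qed
  show ?thesis
    by (rule exI[of _ C], rule exI[of _ "k/2"]) (use C0 k0 main in auto)
qed

end
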